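(* Let $G$ be a graph on $d+2$ vertices with adjacency matrix $A_G$ having eigenvalues $\lambda_1\geq\lambda_2\geq\dots\geq\lambda_{d+2}$, and let $k>1$ with $\overline{B_G}=\frac{1}{k^2-1}I-A_G$. Suppose that $w^T\overline{B_G}w\geq 0$ for all $w\in\mathbf{1}^\perp$, that there exist a nonzero $w\in\mathbf{1}^\perp$ and a real $\gamma$ with $\overline{B_G}w=\gamma\mathbf{1}$, and that $\det(\overline{B_G})=0$. Then there exists an eigenvector $v_2$ of $A_G$ with eigenvalue $\lambda_2$ that is orthogonal to $\mathbf{1}$.
   Context: Graphs are finite and simple; $\mathbf{1}$ is the all-ones vector and $\mathbf{1}^\perp$ its orthogonal complement. *)

theory Defs
  imports "HOL-Analysis.Analysis"
begin

definition simple_graph :: "('n \<Rightarrow> 'n \<Rightarrow> bool) \<Rightarrow> bool" where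
  "simple_graph E \<longleftrightarrow> (\<forall>i j. E i j \<longleftrightarrow> E j i) \<and> (\<forall>i. \<not> E i i)"

definition adj_matrix :: "('n::finite \<Rightarrow> 'n \<Rightarrow> bool) \<Rightarrow> real^'n^'n" where
  "adj_matrix E = (\<chi> i j. if E i j then 1 else 0)"

definition ones :: "real^'n::finite" where
  "ones = (\<chi> i. 1)"

definition sorted_eigenvalues :: "real^'n^'n \<Rightarrow> (nat \<Rightarrow> real) \<Rightarrow> bool" where
  "sorted_eigenvalues M lam \<longleftrightarrow>
     (\<forall>i j. i \<le> j \<longrightarrow> j < CARD('n) \<longrightarrow> lam j \<le> lam i) \<and>
     (\<forall>x. det (x *\<^sub>R mat 1 - M) = (\<Prod>i<CARD('n). (x - lam i)))"

end

theory Submission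
  imports Defs
begin




lemma sym_inner:
  fixes M :: "real^'n::finite^'n"
  assumes "transpose M = M"
  shows "x \<bullet> (M *v y) = (M *v x) \<bullet> y"
  by (metis assms dot_lmul_matrix transpose_matrix_vector)

lemma det_zero_iff:
  fixes M :: "real^'n::finite^'n"
  shows "det M = 0 \<longleftrightarrow> (\<exists>x. x \<noteq> 0 \<and> M *v x = 0)"
proof -
  have "det M \<noteq> 0 \<longleftrightarrow> inj ((*v) M)"
    using det_nz_iff_inj[of "(*v) M"] by (simp add: matrix_vector_mul_linear)
  moreover have "inj ((*v) M) \<longleftrightarrow> (\<forall>x. M *v x = 0 \<longrightarrow> x = 0)"
    using linear_injective_0[OF matrix_vector_mul_linear[of M]] by (simp)
  ultimately show ?thesis by blast
qed

lemma eig_vec: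
  fixes M :: "real^'n::finite^'n"
  shows "(a *\<^sub>R mat 1 - M) *v v = a *\<^sub>R v - M *v v"
  by (simp add: matrix_vector_mult_diff_rdistrib scaleR_matrix_vector_assoc[symmetric])

lemma eig_iff_det:
  fixes M :: "real^'n::finite^'n"
  shows "det (a *\<^sub>R mat 1 - M) = 0 \<longleftrightarrow> (\<exists>v. v \<noteq> 0 \<and> M *v v = a *\<^sub>R v)"
  unfolding det_zero_iff eig_vec by (metis eq_iff_diff_eq_0)

lemma cont_eq_at:
  fixes g h :: "real \<Rightarrow> real"
  assumes "continuous_on UNIV g" "continuous_on UNIV h" "\<And>x. x \<noteq> m \<Longrightarrow> g x = h x"
  shows "g m = h m"
proof -
  have "(g \<longlongrightarrow> g m) (at m)" using assms(1)
    by (simp add: continuous_on_def)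
  moreover have "(h \<longlongrightarrow> h m) (at m)" using assms(2)
    by (simp add: continuous_on_def)
  then have "(g \<longlongrightarrow> h m) (at m)"
    by (rule Lim_transform_eventually) (auto simp: eventually_at_filter assms(3))
  ultimately show ?thesis using tendsto_unique trivial_limit_at by metis
qed

lemma perturb:
  fixes M :: "real^'n::finite^'n"
  assumes sym: "transpose M = M"
    and le: "\<And>y. y \<bullet> (M *v y) \<le> mu * (y \<bullet> y)"
    and eq: "x \<bullet> (M *v x) = mu * (x \<bullet> x)"
  shows "M *v x = mu *\<^sub>R x"
proof -
  define m where "m = M *v x - mu *\<^sub>R x"
  define a where "a = m \<bullet> m"
  define b where "b = m \<bullet> (M *v m) - mu * (m \<bullet> m)"
  have b: "b \<le> 0" using le[of m] by (simp add: b_def)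
  have key: "2 * t * a + t^2 * b \<le> 0" for t
  proof -
    have "(x + t *\<^sub>R m) \<bullet> (M *v (x + t *\<^sub>R m)) \<le> mu * ((x + t *\<^sub>R m) \<bullet> (x + t *\<^sub>R m))"
      by (rule le)
    moreover have "x \<bullet> (M *v m) = m \<bullet> (M *v x)"
      using sym_inner[OF sym, of x m] by (simp add: inner_commute)
    ultimately show ?thesis
      using eq unfolding a_def b_def m_def
      by (simp add: matrix_vector_right_distrib matrix_vector_mult_scaleR inner_add_left inner_add_right
          inner_diff_left inner_diff_right algebra_simps power2_eq_square inner_commute)
  qed
  have a0: "a \<ge> 0" by (simp add: a_def)
  have "a = 0"
  proof (rule ccontr)
    assume "a \<noteq> 0"
    then have ap: "a > 0" using a0 by simp
    define t where "t = a / (1 - b)"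
    have "2 * t * a + t^2 * b \<le> 0" by (rule key)
    then have "(2 * t * a + t^2 * b) * (1 - b)^2 \<le> 0" 
      by (simp add: mult_nonpos_nonneg)
    moreover have "(2 * t * a + t^2 * b) * (1 - b)^2 = a^2 * (2 - b)"
    proof -
      have nz: "1 - b \<noteq> 0" using b by simp
      have tt: "t * (1 - b) = a" unfolding t_def using nz by simp
      have "(2 * t * a + t^2 * b) * (1 - b)^2 = 2 * a * (t * (1 - b)) * (1 - b) + (t * (1 - b))^2 * b"
        by (simp add: algebra_simps power2_eq_square)
      also have "\<dots> = a^2 * (2 - b)" unfolding tt by (simp add: algebra_simps power2_eq_square)
      finally show ?thesis .
    qed
    moreover have "a^2 * (2 - b) > 0" using ap b by simp
    ultimately show False by linarith
  qed
  then show ?thesis unfolding a_def m_def by simp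
qed


lemma root_of:
  fixes M :: "real^'n::finite^'n"
  assumes H: "\<And>x. det (x *\<^sub>R mat 1 - M) = (\<Prod>i<CARD('n). (x - lam i))"
    and "v \<noteq> 0" "M *v v = a *\<^sub>R v"
  shows "\<exists>i<CARD('n). lam i = a"
proof -
  have "det (a *\<^sub>R mat 1 - M) = 0" using eig_iff_det assms by blast
  then have "(\<Prod>i<CARD('n). (a - lam i)) = 0" using H by simp
  then show ?thesis by (force simp: prod_zero_iff)
qed

lemma rayleigh:
  fixes M :: "real^'n::finite^'n"
  assumes sym: "transpose M = M"
    and H: "\<And>x. det (x *\<^sub>R mat 1 - M) = (\<Prod>i<CARD('n). (x - lam i))"
    and srt: "\<And>i j. i \<le> j \<Longrightarrow> j < CARD('n) \<Longrightarrow> lam j \<le> lam i"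
  shows "y \<bullet> (M *v y) \<le> lam 0 * (y \<bullet> y)"
proof -
  let ?S = "sphere (0::real^'n) 1"
  let ?f = "\<lambda>y. y \<bullet> (M *v y)"
  have ne: "?S \<noteq> {}"
  proof -
    obtain k :: 'n where True by blast
    have "axis k (1::real) \<in> ?S" by simp
    then show ?thesis by blast
  qed
  have cont: "continuous_on ?S ?f"
    by (intro continuous_intros linear_continuous_on matrix_vector_mul_linear)
  obtain x0 where x0: "x0 \<in> ?S" and mx: "\<And>y. y \<in> ?S \<Longrightarrow> ?f y \<le> ?f x0"
    using continuous_attains_sup[OF compact_sphere ne cont] by blast
  define mu where "mu = ?f x0"
  have n1: "x0 \<bullet> x0 = 1" using x0 by (simp add: dot_square_norm)
  have le: "?f y \<le> mu * (y \<bullet> y)" for y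
  proof (cases "y = 0")
    case True then show ?thesis by simp
  next
    case False
    define z where "z = (1 / norm y) *\<^sub>R y"
    have "z \<in> ?S" using False by (simp add: z_def)
    then have "?f z \<le> mu" using mx mu_def by blast
    moreover have "?f z = ?f y / (norm y)^2"
      by (simp add: z_def matrix_vector_mult_scaleR power2_eq_square)
    moreover have "y \<bullet> y = (norm y)^2" by (simp add: dot_square_norm)
    moreover have "(norm y)^2 > 0" using False by simp
    ultimately show ?thesis by (simp add: divide_le_eq mult.commute)
  qed
  have "M *v x0 = mu *\<^sub>R x0"
    by (rule perturb[OF sym le]) (simp add: mu_def n1)
  moreover have "x0 \<noteq> 0" using x0 by auto
  ultimately obtain i where "i < CARD('n)" "lam i = mu" using root_of[OF H] by blast
  then have "mu \<le> lam 0" using srt[of 0 i] by simp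
  moreover have "y \<bullet> y \<ge> 0" by simp
  ultimately show ?thesis using le[of y] by (meson mult_right_mono order_trans)
qed


lemma inner_transpose:
  fixes A :: "real^'n::finite^'n"
  shows "x \<bullet> (A *v y) = (transpose A *v x) \<bullet> y"
  by (metis dot_lmul_matrix transpose_matrix_vector)

lemma deflate:
  fixes M :: "real^'n::finite^'n"
  assumes sym: "transpose M = M" and u0: "u \<noteq> 0" and Mu: "M *v u = mu *\<^sub>R u"
  obtains g where "continuous_on UNIV g" "\<And>x. det (x *\<^sub>R mat 1 - M) = (x - mu) * g x"
    "g mu = 0 \<longleftrightarrow> (\<exists>y. y \<noteq> 0 \<and> M *v y = mu *\<^sub>R y \<and> y \<bullet> u = 0)"
proof -
  define u1 where "u1 = (1 / norm u) *\<^sub>R u"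
  have nu1: "norm u1 = 1" using u0 by (simp add: u1_def)
  have Mu1: "M *v u1 = mu *\<^sub>R u1" using Mu by (simp add: u1_def matrix_vector_mult_scaleR)
  obtain k :: 'n where True by blast
  obtain Q where oQ: "orthogonal_matrix Q" and Qe: "Q *v axis k 1 = u1"
    using orthogonal_matrix_exists_basis[OF nu1] by blast
  have QtQ: "transpose Q ** Q = mat 1" and QQt: "Q ** transpose Q = mat 1"
    using oQ by (auto simp: orthogonal_matrix_def)
  have QtQv: "transpose Q *v (Q *v z) = z" for z
    by (simp add: matrix_vector_mul_assoc QtQ)
  have QQtv: "Q *v (transpose Q *v z) = z" for z
    by (metis matrix_vector_mul_assoc QQt matrix_vector_mul_lid)
  define D where "D = transpose Q ** M ** Q"
  have Dv: "D *v z = transpose Q *v (M *v (Q *v z))" for z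
    by (metis D_def matrix_vector_mul_assoc)
  have symD: "transpose D = D"
    by (simp add: D_def matrix_transpose_mul sym matrix_mul_assoc)
  have De: "D *v axis k 1 = mu *\<^sub>R axis k 1"
    using Dv Qe Mu1 QtQv by (metis matrix_vector_mult_scaleR)
  have Dcol: "D $ i $ k = (if i = k then mu else 0)" for i
  proof -
    have "(D *v axis k 1) $ i = D $ i $ k"
      by (simp add: matrix_vector_mult_basis column_def)
    then have "D $ i $ k = mu * (if i = k then 1 else 0)" using De by (simp add: axis_def)
    then show ?thesis by (cases "i = k") auto
  qed
  have Drow: "D $ k $ j = (if j = k then mu else 0)" for j
  proof -
    have "D $ k $ j = transpose D $ j $ k" by (simp add: transpose_def)
    then show ?thesis using symD Dcol[of j] by simp
  qed
  have detsim: "det (x *\<^sub>R mat 1 - M) = det (x *\<^sub>R mat 1 - D)" for x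
  proof -
    have "transpose Q ** (x *\<^sub>R mat 1 - M) ** Q = x *\<^sub>R mat 1 - D"
      unfolding matrix_eq
    proof
      fix v
      have "(transpose Q ** (x *\<^sub>R mat 1 - M) ** Q) *v v = transpose Q *v ((x *\<^sub>R mat 1 - M) *v (Q *v v))"
        by (metis matrix_vector_mul_assoc)
      also have "\<dots> = transpose Q *v (x *\<^sub>R (Q *v v) - M *v (Q *v v))" by (simp only: eig_vec)
      also have "\<dots> = x *\<^sub>R v - D *v v"
        by (simp only: matrix_vector_mult_diff_distrib matrix_vector_mult_scaleR QtQv Dv)
      also have "\<dots> = (x *\<^sub>R mat 1 - D) *v v" by (simp only: eig_vec)
      finally show "(transpose Q ** (x *\<^sub>R mat 1 - M) ** Q) *v v = (x *\<^sub>R mat 1 - D) *v v" .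
    qed
    then have "det (x *\<^sub>R mat 1 - D) = det (transpose Q) * det (x *\<^sub>R mat 1 - M) * det Q"
      by (metis det_mul)
    moreover have "det Q * det Q = 1" using det_orthogonal_matrix[OF oQ] by auto
    ultimately show ?thesis by simp
  qed
  have ent: "(x *\<^sub>R mat 1 - D) $ i $ j = (if i = j then x else 0) - D $ i $ j" for x i j
    by (simp add: mat_def)
  define N where "N x = (\<chi> i. if i = k then axis k 1 else row i (x *\<^sub>R mat 1 - D))" for x
  define g where "g x = det (N x)" for x
  have fac: "det (x *\<^sub>R mat 1 - D) = (x - mu) * g x" for x
  proof -
    have "(\<chi> i. if i = k then (x - mu) *s axis k 1 else row i (x *\<^sub>R mat 1 - D)) = x *\<^sub>R mat 1 - D"
      by (simp add: vec_eq_iff row_def ent Drow axis_def mat_def)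
    then show ?thesis
      using det_row_mul[of k "x - mu" "\<lambda>i. axis k 1" "\<lambda>i. row i (x *\<^sub>R mat 1 - D)"]
      by (simp add: g_def N_def)
  qed
  have cont: "continuous_on UNIV g"
  proof -
    define P :: "real^'n^'n" where "P = (\<chi> i j. if i = k then 0 else (if i = j then 1 else 0))"
    define R :: "real^'n^'n" where "R = (\<chi> i j. if i = k then (if j = k then 1 else 0) else - D $ i $ j)"
    have "N x $ i $ j = x * P $ i $ j + R $ i $ j" for x i j
      by (simp add: N_def P_def R_def row_def ent axis_def mat_def)
    then have "g = (\<lambda>x. sum (\<lambda>p. of_int (sign p) * prod (\<lambda>i. x * P $ i $ p i + R $ i $ p i) UNIV)
      {p. p permutes (UNIV :: 'n set)})"
      by (simp add: g_def det_def fun_eq_iff)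
    then show ?thesis by (simp add: continuous_intros)
  qed
  have ker: "N mu *v z = 0 \<longleftrightarrow> z $ k = 0 \<and> D *v z = mu *\<^sub>R z" for z
  proof -
    have c: "(N mu *v z) $ i = (if i = k then z $ k else mu * z $ i - (D *v z) $ i)" for i
    proof -
      have "(N mu *v z) $ i = (if i = k then z $ k else ((mu *\<^sub>R mat 1 - D) *v z) $ i)"
      proof (cases "i = k")
        case True
        have "(\<Sum>j\<in>UNIV. (if j = k then 1 else 0) * z $ j) = (\<Sum>j\<in>UNIV. if j = k then z $ j else 0)"
          by (rule sum.cong) auto
        then show ?thesis using True by (simp add: N_def matrix_vector_mult_def axis_def)
      next
        case False
        then show ?thesis by (simp add: N_def matrix_vector_mult_def row_def)
      qed
      then show ?thesis by (simp add: eig_vec)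
    qed
    have dk: "(D *v z) $ k = mu * z $ k"
    proof -
      have "(\<Sum>j\<in>UNIV. D $ k $ j * z $ j) = (\<Sum>j\<in>UNIV. if j = k then mu * z $ j else 0)"
        by (rule sum.cong) (auto simp: Drow)
      then show ?thesis by (simp add: matrix_vector_mult_def)
    qed
    show ?thesis
      unfolding vec_eq_iff c using dk by (auto simp: vec_eq_iff) (metis (full_types) mult_zero_right)
  qed
  have geq: "g mu = 0 \<longleftrightarrow> (\<exists>y. y \<noteq> 0 \<and> M *v y = mu *\<^sub>R y \<and> y \<bullet> u = 0)"
  proof
    assume "g mu = 0"
    then obtain z where z0: "z \<noteq> 0" and Nz: "N mu *v z = 0"
      using det_zero_iff g_def by metis
    then have zk: "z $ k = 0" and Dz: "D *v z = mu *\<^sub>R z" using ker by auto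
    define y where "y = Q *v z"
    have "y \<noteq> 0" using z0 QtQv[of z] by (auto simp: y_def)
    moreover have "M *v y = mu *\<^sub>R y"
    proof -
      have "Q *v (D *v z) = M *v y" using Dv QQtv by (simp add: y_def)
      then show ?thesis using Dz by (simp add: y_def matrix_vector_mult_scaleR)
    qed
    moreover have "y \<bullet> u1 = 0"
    proof -
      have "y \<bullet> u1 = (transpose Q *v y) \<bullet> axis k 1"
        using inner_transpose[of y Q "axis k 1"] Qe by simp
      also have "\<dots> = z $ k" by (simp only: y_def QtQv) (simp add: inner_axis)
      finally show ?thesis using zk by simp
    qed
    then have "y \<bullet> u = 0" using u0 by (simp add: u1_def)
    ultimately show "\<exists>y. y \<noteq> 0 \<and> M *v y = mu *\<^sub>R y \<and> y \<bullet> u = 0" by blast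
  next
    assume "\<exists>y. y \<noteq> 0 \<and> M *v y = mu *\<^sub>R y \<and> y \<bullet> u = 0"
    then obtain y where y0: "y \<noteq> 0" and My: "M *v y = mu *\<^sub>R y" and yu: "y \<bullet> u = 0" by blast
    define z where "z = transpose Q *v y"
    have "z \<noteq> 0" using y0 QQtv[of y] by (auto simp: z_def)
    moreover have "D *v z = mu *\<^sub>R z"
      by (simp only: Dv z_def QQtv My matrix_vector_mult_scaleR)
    moreover have "z $ k = 0"
    proof -
      have "y \<bullet> u1 = 0" using yu by (simp add: u1_def)
      moreover have "y \<bullet> u1 = z \<bullet> axis k 1"
        using inner_transpose[of y Q "axis k 1"] Qe by (simp add: z_def)
      ultimately show ?thesis by (simp add: inner_axis)
    qed
    ultimately have "N mu *v z = 0" "z \<noteq> 0" using ker by auto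
    then show "g mu = 0" using det_zero_iff g_def by metis
  qed
  show ?thesis
    using that[OF cont _ geq] detsim fac by simp
qed


lemma prod_split01:
  fixes f :: "nat \<Rightarrow> real"
  assumes "2 \<le> N"
  shows "(\<Prod>i<N. f i) = f 0 * f 1 * (\<Prod>i\<in>{2..<N}. f i)"
proof -
  have "{..<N} = insert 0 (insert 1 {2..<N})" using assms by auto
  then show ?thesis by simp
qed

lemma prod_split0:
  fixes f :: "nat \<Rightarrow> real"
  assumes "1 \<le> N"
  shows "(\<Prod>i<N. f i) = f 0 * (\<Prod>i\<in>{1..<N}. f i)"
proof -
  have "{..<N} = insert 0 {1..<N}" using assms by auto
  then show ?thesis by simp
qed

lemma two_dim:
  fixes A :: "real^'n::finite^'n"
  assumes sym: "transpose A = A"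
    and "x0 \<noteq> 0" "x1 \<noteq> 0" "x0 \<bullet> x1 = 0" "A *v x0 = a0 *\<^sub>R x0" "A *v x1 = a1 *\<^sub>R x1"
    and "L \<le> a0" "L \<le> a1"
  shows "\<exists>z. z \<noteq> 0 \<and> z \<bullet> ov = 0 \<and> z \<bullet> (A *v z) \<ge> L * (z \<bullet> z)"
proof (cases "x0 \<bullet> ov = 0")
  case True
  have "x0 \<bullet> (A *v x0) = a0 * (x0 \<bullet> x0)" using assms by simp
  moreover have "x0 \<bullet> x0 \<ge> 0" by simp
  ultimately show ?thesis using True assms by (metis mult_right_mono)
next
  case False
  define al where "al = x1 \<bullet> ov"
  define be where "be = - (x0 \<bullet> ov)"
  define z where "z = al *\<^sub>R x0 + be *\<^sub>R x1"
  have x10: "x1 \<bullet> x0 = 0" using assms by (simp add: inner_commute)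
  have zz: "z \<bullet> z = al^2 * (x0 \<bullet> x0) + be^2 * (x1 \<bullet> x1)"
    using assms x10 by (simp add: z_def inner_add_left inner_add_right power2_eq_square algebra_simps)
  have zAz: "z \<bullet> (A *v z) = al^2 * a0 * (x0 \<bullet> x0) + be^2 * a1 * (x1 \<bullet> x1)"
    using assms x10 by (simp add: z_def inner_add_left inner_add_right matrix_vector_right_distrib
        matrix_vector_mult_scaleR power2_eq_square algebra_simps)
  have zo: "z \<bullet> ov = 0" by (simp add: z_def al_def be_def inner_add_left algebra_simps)
  have "be^2 * (x1 \<bullet> x1) > 0" using False assms by (simp add: be_def)
  moreover have "al^2 * (x0 \<bullet> x0) \<ge> 0" by simp
  ultimately have "z \<bullet> z > 0" using zz by linarith
  then have "z \<noteq> 0" by auto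
  moreover have "L * (z \<bullet> z) \<le> z \<bullet> (A *v z)"
  proof -
    have "L * (al^2 * (x0 \<bullet> x0)) \<le> a0 * (al^2 * (x0 \<bullet> x0))"
      using assms by (intro mult_right_mono) auto
    moreover have "L * (be^2 * (x1 \<bullet> x1)) \<le> a1 * (be^2 * (x1 \<bullet> x1))"
      using assms by (intro mult_right_mono) auto
    ultimately show ?thesis unfolding zz zAz by (simp add: algebra_simps)
  qed
  ultimately show ?thesis using zo by blast
qed

theorem lemma4p4:
  fixes E :: "'n::finite \<Rightarrow> 'n \<Rightarrow> bool" and d :: nat and k :: real
    and lam :: "nat \<Rightarrow> real"
  assumes "simple_graph E"
    and "CARD('n) = d + 2"
    and "sorted_eigenvalues (adj_matrix E) lam"
    and "k > 1"
    and "\<forall>w::real^'n. w \<bullet> ones = 0 \<longrightarrow>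
           w \<bullet> (((1 / (k\<^sup>2 - 1)) *\<^sub>R mat 1 - adj_matrix E) *v w) \<ge> 0"
    and "\<exists>w::real^'n. w \<noteq> 0 \<and> w \<bullet> ones = 0 \<and>
           (\<exists>\<gamma>::real. ((1 / (k\<^sup>2 - 1)) *\<^sub>R mat 1 - adj_matrix E) *v w = \<gamma> *\<^sub>R ones)"
    and "det ((1 / (k\<^sup>2 - 1)) *\<^sub>R mat 1 - adj_matrix E) = 0"
  shows "\<exists>v::real^'n. v \<noteq> 0 \<and> adj_matrix E *v v = lam 1 *\<^sub>R v \<and> v \<bullet> ones = 0"
proof -
  define A where "A = adj_matrix E"
  define c where "c = 1 / (k\<^sup>2 - 1)"
  define N where "N = CARD('n)"
  have N2: "2 \<le> N" using assms(2) by (simp add: N_def)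
  have symA: "transpose A = A"
    using assms(1) by (simp add: A_def adj_matrix_def simple_graph_def transpose_def vec_eq_iff)
  have Anonneg: "A $ i $ j \<ge> 0" for i j by (simp add: A_def adj_matrix_def)
  have srt: "\<And>i j. i \<le> j \<Longrightarrow> j < CARD('n) \<Longrightarrow> lam j \<le> lam i"
    and H: "\<And>x. det (x *\<^sub>R mat 1 - A) = (\<Prod>i<CARD('n). (x - lam i))"
    using assms(3) by (auto simp: sorted_eigenvalues_def A_def)
  have psd: "w \<bullet> (A *v w) \<le> c * (w \<bullet> w)" if "w \<bullet> ones = 0" for w
    using assms(5) that unfolding A_def[symmetric] c_def[symmetric]
    by (auto simp: eig_vec inner_diff_right)
  obtain v where v0: "v \<noteq> 0" and Av: "A *v v = c *\<^sub>R v" and vo: "v \<bullet> ones = 0"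
  proof -
    obtain u where u0: "u \<noteq> 0" and Au: "A *v u = c *\<^sub>R u"
      using assms(7) eig_iff_det unfolding A_def[symmetric] c_def[symmetric] by blast
    obtain w ga where w0: "w \<noteq> 0" and wo: "w \<bullet> ones = 0" and Bw: "c *\<^sub>R w - A *v w = ga *\<^sub>R ones"
      using assms(6) unfolding A_def[symmetric] c_def[symmetric] by (auto simp: eig_vec)
    show ?thesis
    proof (cases "ga = 0")
      case True
      then have "A *v w = c *\<^sub>R w" using Bw by simp
      then show ?thesis using that w0 wo by blast
    next
      case False
      have "u \<bullet> (c *\<^sub>R w - A *v w) = c * (u \<bullet> w) - (A *v u) \<bullet> w"
        using sym_inner[OF symA, of u w] by (simp add: inner_diff_right)
      also have "\<dots> = 0" using Au by simp
      finally have "ga * (u \<bullet> ones) = 0" using Bw by simp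
      then have "u \<bullet> ones = 0" using False by simp
      then show ?thesis using that u0 Au by blast
    qed
  qed
  have root_eig: "\<exists>x. x \<noteq> 0 \<and> A *v x = lam i *\<^sub>R x" if "i < N" for i
  proof -
    have "(\<Prod>j<N. (lam i - lam j)) = 0" using that by (force simp: prod_zero_iff)
    then show ?thesis using H eig_iff_det unfolding N_def by metis
  qed
  have le1: "lam 1 \<le> c"
  proof (rule ccontr)
    assume "\<not> lam 1 \<le> c"
    then have c1: "c < lam 1" by simp
    have l10: "lam 1 \<le> lam 0" using srt[of 0 1] N2 by (simp add: N_def)
    obtain x0 where x00: "x0 \<noteq> 0" and Ax0: "A *v x0 = lam 0 *\<^sub>R x0" using root_eig[of 0] N2 by auto
    obtain x1 where x10: "x1 \<noteq> 0" and Ax1: "A *v x1 = lam 1 *\<^sub>R x1" and x01: "x0 \<bullet> x1 = 0"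
    proof (cases "lam 0 = lam 1")
      case False
      obtain x1 where x10: "x1 \<noteq> 0" and Ax1: "A *v x1 = lam 1 *\<^sub>R x1" using root_eig[of 1] N2 by auto
      have "lam 1 * (x0 \<bullet> x1) = lam 0 * (x0 \<bullet> x1)"
        using sym_inner[OF symA, of x0 x1] Ax0 Ax1 by simp
      then have "x0 \<bullet> x1 = 0" using False by simp
      then show ?thesis using that x10 Ax1 by blast
    next
      case True
      obtain g where gc: "continuous_on UNIV g" and gf: "\<And>x. det (x *\<^sub>R mat 1 - A) = (x - lam 0) * g x"
        and gz: "g (lam 0) = 0 \<longleftrightarrow> (\<exists>y. y \<noteq> 0 \<and> A *v y = lam 0 *\<^sub>R y \<and> y \<bullet> x0 = 0)"
        using deflate[OF symA x00 Ax0] by blast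
      define r where "r x = (x - lam 0) * (\<Prod>i\<in>{2..<N}. (x - lam i))" for x
      have rc: "continuous_on UNIV r" unfolding r_def by (intro continuous_intros)
      have "g x = r x" if "x \<noteq> lam 0" for x
      proof -
        have "(x - lam 0) * g x = (x - lam 0) * r x"
          using gf[of x] H[of x] prod_split01[OF N2, of "\<lambda>i. x - lam i"] True
          unfolding N_def r_def by (simp add: algebra_simps)
        then show ?thesis using that by simp
      qed
      then have "g (lam 0) = r (lam 0)" using cont_eq_at[OF gc rc] by blast
      then have "g (lam 0) = 0" by (simp add: r_def)
      then obtain y where "y \<noteq> 0" "A *v y = lam 0 *\<^sub>R y" "y \<bullet> x0 = 0" using gz by blast
      then show ?thesis using that True by (simp add: inner_commute)
    qed
    obtain z where z0: "z \<noteq> 0" and zo: "z \<bullet> ones = 0" and zA: "z \<bullet> (A *v z) \<ge> lam 1 * (z \<bullet> z)"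
      using two_dim[OF symA x00 x10 x01 Ax0 Ax1 l10 order_refl] by blast
    have "z \<bullet> z > 0" using z0 by simp
    then have "c * (z \<bullet> z) < lam 1 * (z \<bullet> z)" using c1 by simp
    then show False using psd[OF zo] zA by linarith
  qed
  have ge1: "c \<le> lam 1"
  proof -
    obtain j where jN: "j < N" and lj: "lam j = c" using root_of[OF H v0 Av] unfolding N_def by blast
    show ?thesis
    proof (cases "j = 0")
      case False
      then show ?thesis using srt[of 1 j] jN lj by (simp add: N_def)
    next
      case True
      show ?thesis
      proof (rule ccontr)
        assume "\<not> c \<le> lam 1"
        then have l1: "lam 1 < lam 0" using lj True by simp
        have ray: "x \<bullet> (A *v x) \<le> lam 0 * (x \<bullet> x)" for x
          using rayleigh[OF symA H srt] by blast
        define p where "p = (\<chi> i. \<bar>v $ i\<bar>)"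
        have pp: "p \<bullet> p = v \<bullet> v" by (simp add: p_def inner_vec_def)
        have vAv: "v \<bullet> (A *v v) = lam 0 * (v \<bullet> v)" using Av lj True by simp
        have "v \<bullet> (A *v v) \<le> p \<bullet> (A *v p)"
        proof -
          have "v \<bullet> (A *v v) = (\<Sum>i\<in>UNIV. \<Sum>j\<in>UNIV. v $ i * (A $ i $ j * v $ j))"
            by (simp add: inner_vec_def matrix_vector_mult_def sum_distrib_left)
          also have "\<dots> \<le> (\<Sum>i\<in>UNIV. \<Sum>j\<in>UNIV. \<bar>v $ i\<bar> * (A $ i $ j * \<bar>v $ j\<bar>))"
          proof (intro sum_mono)
            fix i j
            have "v $ i * (A $ i $ j * v $ j) \<le> \<bar>v $ i * (A $ i $ j * v $ j)\<bar>" by simp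
            also have "\<dots> = \<bar>v $ i\<bar> * (A $ i $ j * \<bar>v $ j\<bar>)" using Anonneg[of i j] by (simp add: abs_mult)
            finally show "v $ i * (A $ i $ j * v $ j) \<le> \<bar>v $ i\<bar> * (A $ i $ j * \<bar>v $ j\<bar>)" .
          qed
          also have "\<dots> = p \<bullet> (A *v p)"
            by (simp add: p_def inner_vec_def matrix_vector_mult_def sum_distrib_left)
          finally show ?thesis .
        qed
        then have "p \<bullet> (A *v p) = lam 0 * (p \<bullet> p)" using ray[of p] vAv unfolding pp by linarith
        then have Ap: "A *v p = lam 0 *\<^sub>R p" using perturb[OF symA ray] by blast
        define q1 where "q1 = p + v"
        define q2 where "q2 = p - v"
        have Aq1: "A *v q1 = lam 0 *\<^sub>R q1" using Ap Av lj True
          by (simp add: q1_def matrix_vector_right_distrib scaleR_add_right)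
        have Aq2: "A *v q2 = lam 0 *\<^sub>R q2" using Ap Av lj True
          by (simp add: q2_def matrix_vector_mult_diff_distrib scaleR_diff_right)
        have q12: "q2 \<bullet> q1 = 0" using pp
          by (simp add: q1_def q2_def inner_add_right inner_diff_right inner_commute)
        have sumv: "(\<Sum>i\<in>UNIV. v $ i) = 0" using vo by (simp add: ones_def inner_vec_def)
        have q10: "q1 \<noteq> 0"
        proof
          assume "q1 = 0"
          then have "\<forall>i. \<bar>v $ i\<bar> + v $ i = 0" by (simp add: q1_def p_def vec_eq_iff)
          then have np: "\<forall>i. v $ i \<le> 0" by (metis abs_of_pos add_pos_pos less_irrefl not_le)
          then have "\<forall>i\<in>UNIV. - v $ i = 0" using sumv sum_nonneg_eq_0_iff[of UNIV "\<lambda>i. - v $ i"]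
            by (simp add: sum_negf)
          then have "\<forall>i\<in>UNIV. v $ i = 0" by simp
          then show False using v0 by (simp add: vec_eq_iff)
        qed
        have q20: "q2 \<noteq> 0"
        proof
          assume "q2 = 0"
          then have "\<forall>i. \<bar>v $ i\<bar> - v $ i = 0" by (simp add: q2_def p_def vec_eq_iff)
          then have np: "\<forall>i. v $ i \<ge> 0" by (metis abs_ge_zero eq_iff_diff_eq_0)
          then have "\<forall>i\<in>UNIV. v $ i = 0" using sumv sum_nonneg_eq_0_iff[of UNIV "\<lambda>i. v $ i"] by simp
          then show False using v0 by (simp add: vec_eq_iff)
        qed
        obtain g where gc: "continuous_on UNIV g" and gf: "\<And>x. det (x *\<^sub>R mat 1 - A) = (x - lam 0) * g x"
          and gz: "g (lam 0) = 0 \<longleftrightarrow> (\<exists>y. y \<noteq> 0 \<and> A *v y = lam 0 *\<^sub>R y \<and> y \<bullet> q1 = 0)"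
          using deflate[OF symA q10 Aq1] by blast
        have g0: "g (lam 0) = 0" using gz q20 Aq2 q12 by blast
        define r where "r x = (\<Prod>i\<in>{1..<N}. (x - lam i))" for x
        have rc: "continuous_on UNIV r" unfolding r_def by (intro continuous_intros)
        have "g x = r x" if "x \<noteq> lam 0" for x
        proof -
          have "(x - lam 0) * g x = (x - lam 0) * r x"
          proof -
            have e3: "(\<Prod>i<N. (x - lam i)) = (x - lam 0) * (\<Prod>i\<in>{1..<N}. (x - lam i))"
              using prod_split0[of N "\<lambda>i. x - lam i"] N2 by simp
            show ?thesis using gf[of x] H[of x] e3 unfolding N_def r_def by linarith
          qed
          then show ?thesis using that by simp
        qed
        then have "g (lam 0) = r (lam 0)" using cont_eq_at[OF gc rc] by blast
        moreover have "r (lam 0) \<noteq> 0"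
        proof -
          have "lam i < lam 0" if "i \<in> {1..<N}" for i
            using srt[of 1 i] that l1 by (simp add: N_def)
          then show ?thesis unfolding r_def by (force simp: prod_zero_iff)
        qed
        ultimately show False using g0 by simp
      qed
    qed
  qed
  have "c = lam 1" using le1 ge1 by simp
  then show ?thesis using v0 Av vo unfolding A_def by blast
qed

end
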